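(* A preordered group $(G,P_G)$ is an abelian object of the category $\mathsf{PreOrdGrp}$ if and only if $G$ is an abelian group and $P_G$ is a subgroup of $G$.
   Context: A preordered group is a pair $(G,P_G)$ with $G$ an additively written group and $P_G\subseteq G$ a submonoid closed under conjugation; morphisms are group homomorphisms $f$ with $f(P_G)\subseteq P_H$. This is $\mathsf{PreOrdGrp}$, a unital category (pointed, finitely complete, with $\langle1_X,0\rangle$, $\langle0,1_Y\rangle$ jointly strongly epimorphic into $X\times Y$); products are $(G\times H,P_G\times P_H)$. In a unital category, an object $X$ is commutative if there is $\phi\colon X\times X\to X$ with $\phi\circ\langle1_X,0\rangle=1_X=\phi\circ\langle0,1_X\rangle$ (this makes $X$ an internal commutative monoid), and $X$ is abelian if it is commutative and the corresponding internal commutative monoid is an internal abelian group. Equivalently, $X$ is abelian iff there is $\phi\colon X\times X\to X$ with $\phi\circ\langle0,1_X\rangle=1_X$ and $\phi\circ\langle1_X,1_X\rangle=0$. *)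

theory Defs
  imports "HOL-Algebra.Algebra"
begin

definition preordered_group :: "('a, 'b) monoid_scheme \<Rightarrow> 'a set \<Rightarrow> bool" where
  "preordered_group G P \<longleftrightarrow> group G \<and> P \<subseteq> carrier G \<and> \<one>\<^bsub>G\<^esub> \<in> P
     \<and> (\<forall>x\<in>P. \<forall>y\<in>P. x \<otimes>\<^bsub>G\<^esub> y \<in> P)
     \<and> (\<forall>g\<in>carrier G. \<forall>p\<in>P. g \<otimes>\<^bsub>G\<^esub> p \<otimes>\<^bsub>G\<^esub> inv\<^bsub>G\<^esub> g \<in> P)"

definition preord_hom :: "('a, 'b) monoid_scheme \<Rightarrow> 'a set \<Rightarrow> ('c, 'd) monoid_scheme \<Rightarrow> 'c set
    \<Rightarrow> ('a \<Rightarrow> 'c) \<Rightarrow> bool" where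
  "preord_hom G P H Q f \<longleftrightarrow> f \<in> hom G H \<and> f ` P \<subseteq> Q"

text \<open>Abelian object of PreOrdGrp: an internal commutative monoid structure
  phi : X x X \<rightarrow> X (phi o <1,0> = 1 = phi o <0,1>), the product being (G x G, P x P)
  and 0 the zero morphism, which is moreover an internal abelian group, i.e. admits an
  inverse morphism iota : X \<rightarrow> X with phi o <1,iota> = 0 = phi o <iota,1>.
  Equalities of morphisms are equalities of functions on the carrier.\<close>

definition abelian_object :: "('a, 'b) monoid_scheme \<Rightarrow> 'a set \<Rightarrow> bool" where
  "abelian_object G P \<longleftrightarrow>
     (\<exists>\<phi>. preord_hom (G \<times>\<times> G) (P \<times> P) G P \<phi>
        \<and> (\<forall>x\<in>carrier G. \<phi> (x, \<one>\<^bsub>G\<^esub>) = x)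
        \<and> (\<forall>x\<in>carrier G. \<phi> (\<one>\<^bsub>G\<^esub>, x) = x)
        \<and> (\<exists>\<iota>. preord_hom G P G P \<iota>
             \<and> (\<forall>x\<in>carrier G. \<phi> (x, \<iota> x) = \<one>\<^bsub>G\<^esub>)
             \<and> (\<forall>x\<in>carrier G. \<phi> (\<iota> x, x) = \<one>\<^bsub>G\<^esub>)))"

end

theory Submission
  imports Defs
begin

lemma helper:
  fixes G (structure) and P :: "'a set"
  assumes "preordered_group G P"
  shows "abelian_object G P \<longleftrightarrow> comm_group G \<and> subgroup P G"
proof
  have grp: "group G" and PG: "P \<subseteq> carrier G" and one: "\<one>\<^bsub>G\<^esub> \<in> P"
    and mul: "\<forall>x\<in>P. \<forall>y\<in>P. x \<otimes>\<^bsub>G\<^esub> y \<in> P"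
    using assms unfolding preordered_group_def by auto
  interpret group G by (rule grp)
  {
    assume "abelian_object G P"
    then obtain \<phi> \<iota> where ph: "preord_hom (G \<times>\<times> G) (P \<times> P) G P \<phi>"
      and l: "\<forall>x\<in>carrier G. \<phi> (x, \<one>) = x"
      and r: "\<forall>x\<in>carrier G. \<phi> (\<one>, x) = x"
      and ih: "preord_hom G P G P \<iota>"
      and inv1: "\<forall>x\<in>carrier G. \<phi> (x, \<iota> x) = \<one>"
      unfolding abelian_object_def by blast
    have hom: "\<phi> \<in> hom (G \<times>\<times> G) G" using ph unfolding preord_hom_def by auto
    have phm: "\<phi> ((a,b) \<otimes>\<^bsub>G \<times>\<times> G\<^esub> (c,d)) = \<phi> (a,b) \<otimes> \<phi> (c,d)"
      if "a \<in> carrier G" "b \<in> carrier G" "c \<in> carrier G" "d \<in> carrier G" for a b c d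
      using hom that by (auto simp: hom_def DirProd_def)
    have xy: "\<phi> (x,y) = x \<otimes> y" if "x \<in> carrier G" "y \<in> carrier G" for x y
    proof -
      have "\<phi> (x,y) = \<phi> ((x,\<one>) \<otimes>\<^bsub>G \<times>\<times> G\<^esub> (\<one>,y))" using that by simp
      also have "\<dots> = x \<otimes> y" using phm[of x \<one> \<one> y] that l r by simp
      finally show ?thesis .
    qed
    have yx: "\<phi> (x,y) = y \<otimes> x" if "x \<in> carrier G" "y \<in> carrier G" for x y
    proof -
      have "\<phi> (x,y) = \<phi> ((\<one>,y) \<otimes>\<^bsub>G \<times>\<times> G\<^esub> (x,\<one>))" using that by simp
      also have "\<dots> = y \<otimes> x" using phm[of \<one> y x \<one>] that l r by simp
      finally show ?thesis .
    qed
    have cg: "comm_group G"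
      by (rule group_comm_groupI) (metis xy yx)
    have iotaG: "\<iota> x \<in> carrier G" if "x \<in> carrier G" for x
      using ih that unfolding preord_hom_def hom_def by auto
    have iinv: "\<iota> x = inv x" if "x \<in> carrier G" for x
      using inv1 that xy iotaG by (metis inv_equality l_inv_ex r_inv
          m_assoc inv_closed l_one r_one)
    have "\<iota> ` P \<subseteq> P" using ih unfolding preord_hom_def by auto
    hence "inv x \<in> P" if "x \<in> P" for x using iinv that PG by force
    hence "subgroup P G" using PG one mul by (intro subgroupI) auto
    with cg show "comm_group G \<and> subgroup P G" by simp
  }
  {
    assume a: "comm_group G \<and> subgroup P G"
    then interpret comm_group G by simp
    have sg: "subgroup P G" using a by simp
    show "abelian_object G P"
      unfolding abelian_object_def preord_hom_def
    proof (intro exI[of _ "\<lambda>(x,y). x \<otimes> y"] conjI ballI exI[of _ "\<lambda>x. inv x"])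
      show "(\<lambda>(x, y). x \<otimes> y) \<in> hom (G \<times>\<times> G) G"
        by (rule homI) (auto simp: DirProd_def m_ac)
      show "(\<lambda>(x, y). x \<otimes> y) ` (P \<times> P) \<subseteq> P" using mul by auto
    qed (auto intro!: homI simp: inv_mult subgroup.m_inv_closed[OF sg])
  }
qed

theorem proposition3p7:
  fixes G :: "('a, 'b) monoid_scheme" and P :: "'a set"
  assumes "preordered_group G P"
  shows "abelian_object G P \<longleftrightarrow> comm_group G \<and> subgroup P G"
  using helper[OF assms] .

end
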